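(* Let $G$ be a finite group and $\mathcal{P}$ a prime ideal of $\mathrm{Gh}(\underline{A}_G)$ with $\mathcal{P}(G/e)=(p)\subseteq\mathbb{Z}$, where $p$ is a prime or $0$. For $I\le G$ let $p_I\ge0$ be the integer with $\mathcal{P}(G/G)=\widetilde{A}(G)\cap\prod_{I\le G}p_I\mathbb{Z}$. Then $\mathscr{F}(\mathcal{P})=\{I\le G: p_I\ne1\}$ is a nonempty family of subgroups of $G$.
   Context: A family of subgroups of $G$ is a nonempty set of subgroups closed under conjugation and passing to subgroups. For $H\le G$, $\widetilde{A}(H)$ is the subring of $\prod_{I\le H}\mathbb{Z}$ of tuples $(a_I)_{I\le H}$ with $a_{hIh^{-1}}=a_I$ for $h\in H$ (so $\widetilde{A}(e)=\mathbb{Z}$). $\mathrm{Gh}(\underline{A}_G)$ is the $G$-Tambara functor with $\mathrm{Gh}(\underline{A}_G)(G/H)=\widetilde{A}(H)$ and, for $H\le K$, $g\in G$, $I^g=g^{-1}Ig$: $\mathrm{res}^K_H(b)_L=b_L$; $\mathrm{tr}^K_H(a)_I=\sum_{kH\in K/H,\ I^k\le H}a_{I^k}$; $\mathrm{nm}^K_H(a)_I=\prod_{IgH\in I\backslash K/H}a_{I^g\cap H}$; $c_{g,H}(a)_J=a_{J^g}$ for $J\le gHg^{-1}$. A Tambara ideal is a collection of ideals $\mathcal{I}(G/H)$ closed under all restrictions, transfers, norms and conjugations; it is prime (Nakaoka) if it is not everything and whenever $a\in T(G/K_1)$, $b\in T(G/K_2)$ satisfy $\big(\mathrm{nm}^L_{g_1H_1g_1^{-1}}c_{g_1,H_1}\mathrm{res}^{K_1}_{H_1}(a)\big)\big(\mathrm{nm}^L_{g_2H_2g_2^{-1}}c_{g_2,H_2}\mathrm{res}^{K_2}_{H_2}(b)\big)\in\mathcal{I}(G/L)$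 for all $L,H_1,H_2\le G$, $g_1,g_2\in G$ with $H_i\le K_i$, $g_iH_ig_i^{-1}\le L$, then $a\in\mathcal{I}(G/K_1)$ or $b\in\mathcal{I}(G/K_2)$. *)

theory Defs
  imports "HOL-Algebra.Coset" "HOL-Computational_Algebra.Primes"
begin

text \<open>An element of the ghost ring Atilde(H) is represented as a function from subsets
  of the carrier to int, vanishing outside the subgroups of H, and invariant under
  H-conjugation.\<close>

definition conjg :: "('a, 'b) monoid_scheme \<Rightarrow> 'a \<Rightarrow> 'a set \<Rightarrow> 'a set" where
  "conjg G g I = (\<lambda>x. g \<otimes>\<^bsub>G\<^esub> x \<otimes>\<^bsub>G\<^esub> inv\<^bsub>G\<^esub> g) ` I"
  \<comment> \<open>g I g^-1 ;  I^g = g^-1 I g = conjg G (inv g) I\<close>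

definition sub_le :: "('a, 'b) monoid_scheme \<Rightarrow> 'a set \<Rightarrow> 'a set \<Rightarrow> bool" where
  "sub_le G I H \<longleftrightarrow> subgroup I G \<and> I \<subseteq> H"

definition ghost :: "('a, 'b) monoid_scheme \<Rightarrow> 'a set \<Rightarrow> ('a set \<Rightarrow> int) set" where
  "ghost G H = {a. (\<forall>I. a I \<noteq> 0 \<longrightarrow> sub_le G I H) \<and>
      (\<forall>I h. sub_le G I H \<and> h \<in> H \<longrightarrow> a (conjg G h I) = a I)}"

definition ghost_ideal :: "('a, 'b) monoid_scheme \<Rightarrow> 'a set \<Rightarrow> ('a set \<Rightarrow> int) set \<Rightarrow> bool" where
  "ghost_ideal G H J \<longleftrightarrow> J \<subseteq> ghost G H \<and> (\<lambda>_. 0) \<in> J \<and>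
     (\<forall>a\<in>J. \<forall>b\<in>J. (\<lambda>I. a I + b I) \<in> J) \<and> (\<forall>a\<in>J. (\<lambda>I. - a I) \<in> J) \<and>
     (\<forall>r\<in>ghost G H. \<forall>a\<in>J. (\<lambda>I. r I * a I) \<in> J)"

definition gres :: "('a, 'b) monoid_scheme \<Rightarrow> 'a set \<Rightarrow> 'a set \<Rightarrow> ('a set \<Rightarrow> int) \<Rightarrow> ('a set \<Rightarrow> int)" where
  "gres G K H b = (\<lambda>L. if sub_le G L H then b L else 0)"

definition gtr :: "('a, 'b) monoid_scheme \<Rightarrow> 'a set \<Rightarrow> 'a set \<Rightarrow> ('a set \<Rightarrow> int) \<Rightarrow> ('a set \<Rightarrow> int)" where
  "gtr G K H a = (\<lambda>I. if sub_le G I K then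
      (\<Sum>C\<in>(\<lambda>k. k <#\<^bsub>G\<^esub> H) ` K.
         let k = (SOME k. k \<in> C) in
         if conjg G (inv\<^bsub>G\<^esub> k) I \<subseteq> H then a (conjg G (inv\<^bsub>G\<^esub> k) I) else 0)
     else 0)"

definition dcoset :: "('a, 'b) monoid_scheme \<Rightarrow> 'a set \<Rightarrow> 'a \<Rightarrow> 'a set \<Rightarrow> 'a set" where
  "dcoset G I g H = {i \<otimes>\<^bsub>G\<^esub> g \<otimes>\<^bsub>G\<^esub> h | i h. i \<in> I \<and> h \<in> H}"

definition gnm :: "('a, 'b) monoid_scheme \<Rightarrow> 'a set \<Rightarrow> 'a set \<Rightarrow> ('a set \<Rightarrow> int) \<Rightarrow> ('a set \<Rightarrow> int)" where
  "gnm G K H a = (\<lambda>I. if sub_le G I K then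
      (\<Prod>D\<in>(\<lambda>g. dcoset G I g H) ` K.
         let g = (SOME g. g \<in> D) in a (conjg G (inv\<^bsub>G\<^esub> g) I \<inter> H))
     else 0)"

definition gcj :: "('a, 'b) monoid_scheme \<Rightarrow> 'a \<Rightarrow> 'a set \<Rightarrow> ('a set \<Rightarrow> int) \<Rightarrow> ('a set \<Rightarrow> int)" where
  "gcj G g H a = (\<lambda>J. if sub_le G J (conjg G g H) then a (conjg G (inv\<^bsub>G\<^esub> g) J) else 0)"

text \<open>A Tambara ideal of Gh(A_G): an ideal of Atilde(H) for each subgroup H (level G/H),
  closed under restrictions, transfers, norms and conjugations.\<close>
definition tambara_ideal :: "('a, 'b) monoid_scheme \<Rightarrow> ('a set \<Rightarrow> ('a set \<Rightarrow> int) set) \<Rightarrow> bool" where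
  "tambara_ideal G J \<longleftrightarrow>
     (\<forall>H. subgroup H G \<longrightarrow> ghost_ideal G H (J H)) \<and>
     (\<forall>K H b. subgroup K G \<and> sub_le G H K \<and> b \<in> J K \<longrightarrow> gres G K H b \<in> J H) \<and>
     (\<forall>K H a. subgroup K G \<and> sub_le G H K \<and> a \<in> J H \<longrightarrow> gtr G K H a \<in> J K) \<and>
     (\<forall>K H a. subgroup K G \<and> sub_le G H K \<and> a \<in> J H \<longrightarrow> gnm G K H a \<in> J K) \<and>
     (\<forall>g H a. g \<in> carrier G \<and> subgroup H G \<and> a \<in> J H \<longrightarrow> gcj G g H a \<in> J (conjg G g H))"

text \<open>Prime Tambara ideal in the sense of Nakaoka.\<close>
definition prime_tambara_ideal :: "('a, 'b) monoid_scheme \<Rightarrow> ('a set \<Rightarrow> ('a set \<Rightarrow> int) set) \<Rightarrow> bool" where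
  "prime_tambara_ideal G P \<longleftrightarrow> tambara_ideal G P \<and>
     (\<exists>H. subgroup H G \<and> P H \<noteq> ghost G H) \<and>
     (\<forall>K1 K2 a b. subgroup K1 G \<and> subgroup K2 G \<and> a \<in> ghost G K1 \<and> b \<in> ghost G K2 \<and>
        (\<forall>L H1 H2 g1 g2. subgroup L G \<and> sub_le G H1 K1 \<and> sub_le G H2 K2 \<and>
            g1 \<in> carrier G \<and> g2 \<in> carrier G \<and>
            conjg G g1 H1 \<subseteq> L \<and> conjg G g2 H2 \<subseteq> L \<longrightarrow>
            (\<lambda>I. gnm G L (conjg G g1 H1) (gcj G g1 H1 (gres G K1 H1 a)) I *
                 gnm G L (conjg G g2 H2) (gcj G g2 H2 (gres G K2 H2 b)) I) \<in> P L)
        \<longrightarrow> a \<in> P K1 \<or> b \<in> P K2)"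

definition pcoord :: "('a, 'b) monoid_scheme \<Rightarrow> ('a set \<Rightarrow> ('a set \<Rightarrow> int) set) \<Rightarrow> 'a set \<Rightarrow> nat" where
  "pcoord G P I = (THE n. (\<lambda>a. a I) ` P (carrier G) = {x. int n dvd x})"

definition subgroup_family :: "('a, 'b) monoid_scheme \<Rightarrow> 'a set set \<Rightarrow> bool" where
  "subgroup_family G F \<longleftrightarrow> F \<noteq> {} \<and> (\<forall>I\<in>F. subgroup I G) \<and>
     (\<forall>I\<in>F. \<forall>g\<in>carrier G. conjg G g I \<in> F) \<and>
     (\<forall>I\<in>F. \<forall>J. sub_le G J I \<longrightarrow> J \<in> F)"

end

theory Submission
  imports Defs
begin

context group begin

lemma conjg_comp:
  assumes "g \<in> carrier G" "h \<in> carrier G" "I \<subseteq> carrier G"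
  shows "conjg G g (conjg G h I) = conjg G (g \<otimes> h) I"
  unfolding conjg_def image_image
proof (rule image_cong[OF refl])
  fix x assume "x \<in> I"
  hence x: "x \<in> carrier G" using assms by auto
  show "g \<otimes> (h \<otimes> x \<otimes> inv h) \<otimes> inv g = g \<otimes> h \<otimes> x \<otimes> inv (g \<otimes> h)"
    using assms x by (simp add: inv_mult_group m_assoc)
qed

lemma conjg_one: "I \<subseteq> carrier G \<Longrightarrow> conjg G \<one> I = I"
  unfolding conjg_def by (force)

lemma conjg_inv_cancel:
  assumes "g \<in> carrier G" "I \<subseteq> carrier G"
  shows "conjg G (inv g) (conjg G g I) = I"
  using assms by (simp add: conjg_comp conjg_one)

lemma conjg_subset: "g \<in> carrier G \<Longrightarrow> I \<subseteq> carrier G \<Longrightarrow> conjg G g I \<subseteq> carrier G"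
  unfolding conjg_def by auto

lemma conjg_subgroup:
  assumes "subgroup I G" "g \<in> carrier G"
  shows "subgroup (conjg G g I) G"
proof
  have Ic: "I \<subseteq> carrier G" using assms subgroup.subset by blast
  show "conjg G g I \<subseteq> carrier G" using conjg_subset[OF assms(2) Ic] .
  show "\<one> \<in> conjg G g I" unfolding conjg_def
    using assms subgroup.one_closed[OF assms(1)]
    by (intro image_eqI[where x="\<one>"]) auto
  fix x y assume "x \<in> conjg G g I" "y \<in> conjg G g I"
  then obtain a b where ab: "a \<in> I" "b \<in> I" "x = g \<otimes> a \<otimes> inv g" "y = g \<otimes> b \<otimes> inv g"
    unfolding conjg_def by auto
  have ac: "a \<in> carrier G" "b \<in> carrier G" using ab Ic by auto
  have "x \<otimes> y = g \<otimes> (a \<otimes> b) \<otimes> inv g"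
    using ab ac assms(2) by (simp add: m_assoc flip: m_assoc[of "inv g"])
  thus "x \<otimes> y \<in> conjg G g I" unfolding conjg_def
    using subgroup.m_closed[OF assms(1) ab(1,2)] by blast
  have "inv x = g \<otimes> inv a \<otimes> inv g"
    using ab ac assms(2) by (simp add: inv_mult_group m_assoc)
  thus "inv x \<in> conjg G g I" unfolding conjg_def
    using subgroup.m_inv_closed[OF assms(1) ab(1)] by blast
qed

lemma conjg_self:
  assumes "subgroup I G" "i \<in> I"
  shows "conjg G i I = I"
proof -
  have Ic: "I \<subseteq> carrier G" using assms subgroup.subset by blast
  have ic: "i \<in> carrier G" using assms Ic by auto
  have sub: "conjg G j I \<subseteq> I" if "j \<in> I" for j
    unfolding conjg_def using that assms(1)
    by (auto intro!: subgroup.m_closed subgroup.m_inv_closed)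
  have "I = conjg G i (conjg G (inv i) I)"
    using ic Ic by (simp add: conjg_comp conjg_one)
  also have "\<dots> \<subseteq> conjg G i I"
    using sub[of "inv i"] subgroup.m_inv_closed[OF assms] unfolding conjg_def by blast
  finally show ?thesis using sub[OF assms(2)] by blast
qed


lemma normalizer_subgroup:
  assumes "I \<subseteq> carrier G"
  shows "subgroup {g \<in> carrier G. conjg G g I = I} G"
proof
  show "{g \<in> carrier G. conjg G g I = I} \<subseteq> carrier G" by auto
  show "\<one> \<in> {g \<in> carrier G. conjg G g I = I}" using assms by (simp add: conjg_one)
  fix x y assume x: "x \<in> {g \<in> carrier G. conjg G g I = I}" and y: "y \<in> {g \<in> carrier G. conjg G g I = I}"
  thus "x \<otimes> y \<in> {g \<in> carrier G. conjg G g I = I}"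
    using assms by (simp add: conjg_comp[symmetric])
  from x show "inv x \<in> {g \<in> carrier G. conjg G g I = I}"
    using assms conjg_inv_cancel[of x I] by simp
qed

lemma key:
  assumes fin: "finite (carrier G)" and T: "tambara_ideal G P"
    and I: "subgroup I G" and J: "sub_le G J I"
    and a: "a \<in> P (carrier G)" "a J = 1"
  shows "\<exists>z \<in> P (carrier G). z I = 1"
proof -
  define N where "N = {g \<in> carrier G. conjg G g I = I}"
  have Ic: "I \<subseteq> carrier G" using I subgroup.subset by blast
  have N: "subgroup N G" unfolding N_def using normalizer_subgroup[OF Ic] .
  have IN: "I \<subseteq> N" unfolding N_def using conjg_self[OF I] Ic by auto
  have Jsub: "subgroup J G" "J \<subseteq> I" using J unfolding sub_le_def by auto
  have JN: "J \<subseteq> N" using IN Jsub by auto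
  have sGG: "subgroup (carrier G) G" by (rule subgroup_self)
  have Tr: "\<And>K H b. subgroup K G \<Longrightarrow> sub_le G H K \<Longrightarrow> b \<in> P K \<Longrightarrow> gres G K H b \<in> P H"
   and Tt: "\<And>K H a. subgroup K G \<Longrightarrow> sub_le G H K \<Longrightarrow> a \<in> P H \<Longrightarrow> gtr G K H a \<in> P K"
   and Tn: "\<And>K H a. subgroup K G \<Longrightarrow> sub_le G H K \<Longrightarrow> a \<in> P H \<Longrightarrow> gnm G K H a \<in> P K"
   and Ti: "\<And>H. subgroup H G \<Longrightarrow> ghost_ideal G H (P H)"
    using T unfolding tambara_ideal_def by blast+
  define b where "b = gres G (carrier G) J a"
  have b: "b \<in> P J" unfolding b_def
    using Tr[OF sGG _ a(1)] Jsub subgroup.subset[OF Jsub(1)] by (simp add: sub_le_def)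
  have bJ: "b J = 1" unfolding b_def gres_def sub_le_def using Jsub a(2) by simp
  define y where "y = gnm G N J b"
  have y: "y \<in> P N" unfolding y_def using Tn[OF N _ b] Jsub JN by (simp add: sub_le_def)
  have yI: "y I = 1"
    unfolding y_def gnm_def
  proof -
    have "sub_le G I N" using I IN by (simp add: sub_le_def)
    moreover have "(\<Prod>D\<in>(\<lambda>g. dcoset G I g J) ` N.
         let g = (SOME g. g \<in> D) in b (conjg G (inv g) I \<inter> J)) = 1"
    proof (rule prod.neutral, rule ballI)
      fix D assume "D \<in> (\<lambda>g. dcoset G I g J) ` N"
      then obtain g0 where g0: "g0 \<in> N" "D = dcoset G I g0 J" by auto
      have g0c: "g0 \<in> carrier G" using g0 N_def by auto
      have "g0 \<in> D" unfolding g0(2) dcoset_def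
        using g0c subgroup.one_closed[OF I] subgroup.one_closed[OF Jsub(1)]
        by (intro CollectI exI[of _ "\<one>"]) auto
      hence gD: "(SOME g. g \<in> D) \<in> D" by (rule someI)
      define g where "g = (SOME g. g \<in> D)"
      have "g \<in> D" using gD g_def by simp
      then obtain i h where ih: "i \<in> I" "h \<in> J" "g = i \<otimes> g0 \<otimes> h"
        unfolding g0(2) dcoset_def by auto
      have "g \<in> N" using ih g0(1) IN JN subgroup.m_closed[OF N] by (metis subsetD)
      hence "inv g \<in> N" using subgroup.m_inv_closed[OF N] by auto
      hence "conjg G (inv g) I = I" unfolding N_def by auto
      hence "b (conjg G (inv g) I \<inter> J) = 1" using Jsub bJ by (simp add: Int_absorb1)
      thus "(let g = (SOME g. g \<in> D) in b (conjg G (inv g) I \<inter> J)) = 1"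
        using g_def by simp
    qed
    ultimately show "(if sub_le G I N then (\<Prod>D\<in>(\<lambda>g. dcoset G I g J) ` N.
         let g = (SOME g. g \<in> D) in b (conjg G (inv g) I \<inter> J)) else 0) = 1" by simp
  qed
  define r where "r = (\<lambda>L. if L = I then (1::int) else 0)"
  have r: "r \<in> ghost G N"
    unfolding ghost_def
  proof (intro CollectI conjI allI impI)
    fix L assume "r L \<noteq> 0" thus "sub_le G L N" using I IN by (simp add: r_def sub_le_def split: if_splits)
  next
    fix L h assume Lh: "sub_le G L N \<and> h \<in> N"
    hence hc: "h \<in> carrier G" and hI: "conjg G h I = I" and Lc: "L \<subseteq> carrier G"
      unfolding N_def sub_le_def using subgroup.subset by auto
    have "conjg G h L = I \<longleftrightarrow> L = I"
      using conjg_inv_cancel[OF hc Lc] hI conjg_inv_cancel[OF hc Ic] by metis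
    thus "r (conjg G h L) = r L" by (simp add: r_def)
  qed
  define x where "x = (\<lambda>L. r L * y L)"
  have x: "x \<in> P N" using Ti[OF N] r y unfolding ghost_ideal_def x_def by blast
  define z where "z = gtr G (carrier G) N x"
  have z: "z \<in> P (carrier G)" unfolding z_def using Tt[OF sGG _ x] N
    by (simp add: sub_le_def subgroup.subset)
  have zI: "z I = 1"
  proof -
    have sI: "sub_le G I (carrier G)" using I Ic by (simp add: sub_le_def)
    define t where "t = (\<lambda>C. let k = (SOME k. k \<in> C) in
         if conjg G (inv k) I \<subseteq> N then x (conjg G (inv k) I) else 0)"
    have NN: "\<one> <# N = N" using lcos_mult_one subgroup.subset[OF N] by blast
    have t: "t C = (if C = N then 1 else 0)" if C: "C \<in> (\<lambda>k. k <# N) ` carrier G" for C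
    proof -
      obtain k0 where k0: "k0 \<in> carrier G" "C = k0 <# N" using C by auto
      have "k0 \<in> C" unfolding k0(2) l_coset_def using subgroup.one_closed[OF N] k0(1)
        by (intro UN_I[of "\<one>"]) auto
      hence kC: "(SOME k. k \<in> C) \<in> C" by (rule someI)
      define k where "k = (SOME k. k \<in> C)"
      have kC': "k \<in> C" using kC k_def by simp
      have kc: "k \<in> carrier G" using l_coset_carrier[OF kC'[unfolded k0(2)] k0(1) N] .
      have Ck: "C = k <# N" using l_repr_independence[OF kC'[unfolded k0(2)] k0(1) N] k0(2) by simp
      have tk: "t C = (if conjg G (inv k) I \<subseteq> N then x (conjg G (inv k) I) else 0)"
        unfolding t_def k_def by simp
      show ?thesis
      proof (cases "C = N")
        case True
        hence "k \<in> N" using kC' by simp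
        hence "conjg G (inv k) I = I" using subgroup.m_inv_closed[OF N] unfolding N_def by auto
        thus ?thesis using tk True IN yI by (simp add: x_def r_def)
      next
        case False
        have "conjg G (inv k) I \<noteq> I"
        proof
          assume "conjg G (inv k) I = I"
          hence "inv k \<in> N" unfolding N_def using kc by auto
          hence "k \<in> N" using subgroup.m_inv_closed[OF N] kc by fastforce
          hence "k \<in> \<one> <# N" using NN by simp
          hence "\<one> <# N = k <# N" using l_repr_independence[OF _ one_closed N] by blast
          thus False using False Ck NN by simp
        qed
        thus ?thesis using tk False by (simp add: x_def r_def)
      qed
    qed
    have Nin: "N \<in> (\<lambda>k. k <# N) ` carrier G" using NN by force
    have "z I = (\<Sum>C\<in>(\<lambda>k. k <# N) ` carrier G. t C)"
      unfolding z_def gtr_def t_def using sI by simp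
    also have "\<dots> = (\<Sum>C\<in>(\<lambda>k. k <# N) ` carrier G. if C = N then 1 else 0)"
      using t by (rule sum.cong[OF refl])
    also have "\<dots> = 1" using Nin fin by simp
    finally show ?thesis .
  qed
  show ?thesis using z zI by blast
qed

end

theorem lemma4p9:
  fixes G :: "('a, 'b) monoid_scheme" and P :: "'a set \<Rightarrow> ('a set \<Rightarrow> int) set" and p :: nat
  assumes "group G" and "finite (carrier G)"
    and "prime_tambara_ideal G P"
    and "prime p \<or> p = 0"
    and "P {\<one>\<^bsub>G\<^esub>} = {a \<in> ghost G {\<one>\<^bsub>G\<^esub>}. int p dvd a {\<one>\<^bsub>G\<^esub>}}"
    and "P (carrier G) = {a \<in> ghost G (carrier G).
                          \<forall>I. subgroup I G \<longrightarrow> int (pcoord G P I) dvd a I}"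
  shows "subgroup_family G {I. subgroup I G \<and> pcoord G P I \<noteq> 1}"
proof -
  interpret group G by fact
  have T: "tambara_ideal G P" using assms(3) unfolding prime_tambara_ideal_def by blast
  have sGG: "subgroup (carrier G) G" by (rule subgroup_self)
  have pc_conj: "pcoord G P (conjg G g I) = pcoord G P I"
    if I: "subgroup I G" and g: "g \<in> carrier G" for I g
  proof -
    have "(\<lambda>a. a (conjg G g I)) ` P (carrier G) = (\<lambda>a. a I) ` P (carrier G)"
    proof (rule image_cong[OF refl])
      fix a assume "a \<in> P (carrier G)"
      hence "a \<in> ghost G (carrier G)" using assms(6) by blast
      thus "a (conjg G g I) = a I" unfolding ghost_def using I g subgroup.subset[OF I]
        by (auto simp: sub_le_def)
    qed
    thus ?thesis unfolding pcoord_def by simp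
  qed
  have one_pc: "pcoord G P I = 1" if "a \<in> P (carrier G)" "a I = 1" "subgroup I G" for a I
  proof -
    have "int (pcoord G P I) dvd 1" using that assms(6) by force
    thus ?thesis by simp
  qed
  define A where "A = (\<lambda>L. if subgroup L G \<and> pcoord G P L = 1 then (1::int) else 0)"
  have A: "A \<in> P (carrier G)"
    unfolding assms(6)
  proof (intro CollectI conjI allI impI)
    show "A \<in> ghost G (carrier G)" unfolding ghost_def
    proof (intro CollectI conjI allI impI)
      fix I assume "A I \<noteq> 0" thus "sub_le G I (carrier G)"
        by (auto simp: A_def sub_le_def split: if_splits dest: subgroup.subset)
    next
      fix I h assume "sub_le G I (carrier G) \<and> h \<in> carrier G"
      thus "A (conjg G h I) = A I" using pc_conj conjg_subgroup by (auto simp: A_def sub_le_def)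
    qed
  next
    fix I show "int (pcoord G P I) dvd A I" by (simp add: A_def)
  qed
  have AI: "A I = 1" if "subgroup I G" "pcoord G P I = 1" for I using that by (simp add: A_def)
  have triv: "subgroup {\<one>\<^bsub>G\<^esub>} G" by (rule triv_subgroup)
  have ne: "pcoord G P {\<one>\<^bsub>G\<^esub>} \<noteq> 1"
  proof
    assume h: "pcoord G P {\<one>\<^bsub>G\<^esub>} = 1"
    have "gres G (carrier G) {\<one>\<^bsub>G\<^esub>} A \<in> P {\<one>\<^bsub>G\<^esub>}"
    proof -
      have "\<forall>K H b. subgroup K G \<and> sub_le G H K \<and> b \<in> P K \<longrightarrow> gres G K H b \<in> P H"
        using T unfolding tambara_ideal_def by blast
      moreover have "sub_le G {\<one>\<^bsub>G\<^esub>} (carrier G)" using triv by (simp add: sub_le_def)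
      ultimately show ?thesis using sGG A by blast
    qed
    moreover have "gres G (carrier G) {\<one>\<^bsub>G\<^esub>} A {\<one>\<^bsub>G\<^esub>} = 1"
      using AI[OF triv h] triv by (simp add: gres_def sub_le_def)
    ultimately have "int p dvd 1" using assms(5) by force
    hence "p = 1" by simp
    thus False using assms(4) by auto
  qed
  show ?thesis unfolding subgroup_family_def
  proof (intro conjI ballI allI impI)
    show "{I. subgroup I G \<and> pcoord G P I \<noteq> 1} \<noteq> {}" using triv ne by blast
  next
    fix I assume "I \<in> {I. subgroup I G \<and> pcoord G P I \<noteq> 1}"
    thus "subgroup I G" by simp
  next
    fix I g assume "I \<in> {I. subgroup I G \<and> pcoord G P I \<noteq> 1}" "g \<in> carrier G"
    thus "conjg G g I \<in> {I. subgroup I G \<and> pcoord G P I \<noteq> 1}"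
      using pc_conj conjg_subgroup by auto
  next
    fix I J assume I: "I \<in> {I. subgroup I G \<and> pcoord G P I \<noteq> 1}" and J: "sub_le G J I"
    have Js: "subgroup J G" using J by (simp add: sub_le_def)
    have "pcoord G P J \<noteq> 1"
    proof
      assume "pcoord G P J = 1"
      hence "A J = 1" using AI Js by blast
      then obtain z where "z \<in> P (carrier G)" "z I = 1"
        using key[OF assms(2) T _ J A] I by auto
      hence "pcoord G P I = 1" using one_pc I by blast
      thus False using I by simp
    qed
    thus "J \<in> {I. subgroup I G \<and> pcoord G P I \<noteq> 1}" using Js by simp
  qed
qed

end
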